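(* For every $k\ge1$, the linear map induced by $T_k$ on the quotient space $V_k/\psi_k(V_1)$ (well defined since $\psi_k(V_1)$ is $T_k$-invariant) is nilpotent.
   Context: Let $\mathcal{A}$ be a finite alphabet of $r$ symbols and $T=(T_{x,y})_{x,y\in\mathcal{A}}$ an $r\times r$ matrix with entries in $\{0,1\}$. For $k\ge1$, an admissible $k$-word is a string $a_1\cdots a_k$ of symbols with $T_{a_{i+1},a_i}=1$ for $1\le i\le k-1$. $V_k$ is the complex vector space with basis $\{[w]\}$ indexed by admissible $k$-words. $\psi_k:V_1\to V_k$ is linear with $\psi_k([a])$ the sum of $[w]$ over all admissible $k$-words $w$ beginning with $a$. $T_k:V_k\to V_k$ is linear with $T_k([a_1\cdots a_k])=\sum[a_2\cdots a_kx]$, summed over all symbols $x$ such that $a_2\cdots a_kx$ is admissible. One has $T_k\circ\psi_k=\psi_k\circ T$, where $T([a])=\sum_{b:T_{b,a}=1}[b]$. *)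

theory Defs
  imports Complex_Main "HOL-Library.Function_Algebras"
begin

definition admissible :: "('a \<Rightarrow> 'a \<Rightarrow> nat) \<Rightarrow> nat \<Rightarrow> 'a list \<Rightarrow> bool" where
  "admissible M k w \<longleftrightarrow> length w = k \<and> (\<forall>i. Suc i < k \<longrightarrow> M (w ! Suc i) (w ! i) = 1)"

definition adm_words :: "('a \<Rightarrow> 'a \<Rightarrow> nat) \<Rightarrow> nat \<Rightarrow> 'a list set" where
  "adm_words M k = {w. admissible M k w}"

text \<open>V_k: complex vector space with basis indexed by admissible k-words, represented
  as coefficient functions supported on admissible k-words.\<close>
definition Vspace :: "('a \<Rightarrow> 'a \<Rightarrow> nat) \<Rightarrow> nat \<Rightarrow> ('a list \<Rightarrow> complex) set" where
  "Vspace M k = {v. \<forall>w. v w \<noteq> 0 \<longrightarrow> admissible M k w}"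

definition bvec :: "'a list \<Rightarrow> ('a list \<Rightarrow> complex)" where
  "bvec w = (\<lambda>u. if u = w then 1 else 0)"

text \<open>V_1 is identified with coefficient functions on symbols ('a \<Rightarrow> complex):
  every 1-word is admissible.\<close>

definition psi_basis :: "('a \<Rightarrow> 'a \<Rightarrow> nat) \<Rightarrow> nat \<Rightarrow> 'a \<Rightarrow> ('a list \<Rightarrow> complex)" where
  "psi_basis M k a = (\<Sum>w\<in>{w\<in>adm_words M k. hd w = a}. bvec w)"

definition psi :: "('a::finite \<Rightarrow> 'a \<Rightarrow> nat) \<Rightarrow> nat \<Rightarrow> ('a \<Rightarrow> complex) \<Rightarrow> ('a list \<Rightarrow> complex)" where
  "psi M k c = (\<lambda>u. \<Sum>a\<in>UNIV. c a * psi_basis M k a u)"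

definition Tk_basis :: "('a::finite \<Rightarrow> 'a \<Rightarrow> nat) \<Rightarrow> nat \<Rightarrow> 'a list \<Rightarrow> ('a list \<Rightarrow> complex)" where
  "Tk_basis M k w = (\<Sum>x\<in>{x. admissible M k (tl w @ [x])}. bvec (tl w @ [x]))"

definition Tk :: "('a::finite \<Rightarrow> 'a \<Rightarrow> nat) \<Rightarrow> nat \<Rightarrow> ('a list \<Rightarrow> complex) \<Rightarrow> ('a list \<Rightarrow> complex)" where
  "Tk M k v = (\<lambda>u. \<Sum>w\<in>adm_words M k. v w * Tk_basis M k w u)"

end

theory Submission imports Defs begin

lemma sum_fun_apply: "(\<Sum>w\<in>S. (f w :: 'b \<Rightarrow> 'c::comm_monoid_add)) u = (\<Sum>w\<in>S. f w u)"
  by (induction S rule: infinite_finite_induct) auto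

lemma finite_adm: "finite (adm_words M k :: ('a::finite) list set)"
proof -
  have "adm_words M k \<subseteq> {xs. set xs \<subseteq> UNIV \<and> length xs = k}"
    by (auto simp: adm_words_def admissible_def)
  then show ?thesis using finite_lists_length_eq[of "UNIV::'a set" k] finite_subset by auto
qed

lemma psi_basis_eq: "psi_basis M k (a::'a::finite) u = (if admissible M k u \<and> hd u = a then 1 else 0)"
  unfolding psi_basis_def bvec_def sum_fun_apply
  using finite_adm[of M k]
  by (simp add: sum.delta adm_words_def)

lemma snoc_eq_iff_butlast': "(u = ys @ [x]) = (x = last u \<and> u \<noteq> [] \<and> butlast u = ys)"
  by (metis snoc_eq_iff_butlast)

lemma Tk_basis_eq: "Tk_basis M k (w::'a::finite list) u =
   (if admissible M k u \<and> u \<noteq> [] \<and> butlast u = tl w then 1 else 0)"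
proof -
  have "Tk_basis M k w u = (\<Sum>x\<in>{x. admissible M k (tl w @ [x])}. if x = last u \<and> u \<noteq> [] \<and> butlast u = tl w then 1 else 0)"
    unfolding Tk_basis_def bvec_def sum_fun_apply
    by (intro sum.cong refl) (simp only: snoc_eq_iff_butlast')
  also have "\<dots> = (if admissible M k u \<and> u \<noteq> [] \<and> butlast u = tl w then 1 else 0)"
  proof (cases "u \<noteq> [] \<and> butlast u = tl w")
    case True
    then have uu: "tl w @ [last u] = u" by (metis append_butlast_last_id)
    have "(\<Sum>x\<in>{x. admissible M k (tl w @ [x])}. if x = last u \<and> u \<noteq> [] \<and> butlast u = tl w then 1 else 0)
        = (\<Sum>x\<in>{x. admissible M k (tl w @ [x])}. if x = last u then 1 else 0)"
      using True by simp
    also have "\<dots> = (if last u \<in> {x. admissible M k (tl w @ [x])} then 1 else 0)"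
      by (rule sum.delta) simp
    finally show ?thesis using True uu by simp
  next
    case False
    then show ?thesis by (auto intro!: sum.neutral)
  qed
  finally show ?thesis .
qed

lemma adm_cons: "admissible M k (a # xs) \<longleftrightarrow> k = Suc (length xs) \<and> admissible M (length xs) xs \<and> (xs \<noteq> [] \<longrightarrow> M (hd xs) a = 1)"
  unfolding admissible_def
  apply (cases xs)
   apply auto[1]
  apply (auto simp: nth_Cons split: nat.splits)
  done

lemma adm_butlast: "admissible M k u \<Longrightarrow> admissible M (k - 1) (butlast u)"
  unfolding admissible_def by (auto simp: nth_butlast)

lemma adm_len: "admissible M k u \<Longrightarrow> length u = k"
  by (simp add: admissible_def)

lemma Tk_eq: "Tk M k v u = (\<Sum>w\<in>{w\<in>adm_words M k. butlast u = tl w}. v w) * (if admissible M k u \<and> u \<noteq> [] then 1 else 0)"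
proof -
  have "Tk M k v u = (\<Sum>w\<in>adm_words M k. if butlast u = tl w then v w * (if admissible M k u \<and> u \<noteq> [] then 1 else 0) else 0)"
    unfolding Tk_def Tk_basis_eq by (intro sum.cong refl) simp
  also have "\<dots> = (\<Sum>w\<in>{w\<in>adm_words M k. butlast u = tl w}. v w * (if admissible M k u \<and> u \<noteq> [] then 1 else 0))"
    by (rule sum.inter_filter[OF finite_adm, symmetric])
  also have "\<dots> = (\<Sum>w\<in>{w\<in>adm_words M k. butlast u = tl w}. v w) * (if admissible M k u \<and> u \<noteq> [] then 1 else 0)"
    by (simp only: sum_distrib_right)
  finally show ?thesis .
qed

lemma Tk_formula:
  fixes M :: "'a::finite \<Rightarrow> 'a \<Rightarrow> nat"
  assumes u: "admissible M k u" and k: "k \<ge> 2"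
  shows "Tk M k v u = (\<Sum>a\<in>{a. M (hd u) a = 1}. v (a # butlast u))"
proof -
  have lu: "length u = k" using u by (simp add: admissible_def)
  have ne: "u \<noteq> []" "butlast u \<noteq> []" using lu k by (auto simp flip: length_greater_0_conv)
  have hb: "hd (butlast u) = hd u" using ne
    by (metis append_butlast_last_id hd_append2)
  have ab: "admissible M (length (butlast u)) (butlast u)"
    using adm_butlast[OF u] lu by simp
  have S: "{w\<in>adm_words M k. butlast u = tl w} = (\<lambda>a. a # butlast u) ` {a. M (hd u) a = 1}"
  proof (intro set_eqI iffI)
    fix w assume w: "w \<in> {w\<in>adm_words M k. butlast u = tl w}"
    then have "length w = k" by (simp add: adm_words_def admissible_def)
    then have "w = hd w # butlast u" using w k by (cases w) auto
    moreover have "admissible M k (hd w # butlast u)" using w calculation by (simp add: adm_words_def)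
    moreover have "M (hd u) (hd w) = 1" using calculation ne hb by (metis adm_cons)
    ultimately show "w \<in> (\<lambda>a. a # butlast u) ` {a. M (hd u) a = 1}"
      by (metis (mono_tags) image_eqI mem_Collect_eq)
  next
    fix w assume "w \<in> (\<lambda>a. a # butlast u) ` {a. M (hd u) a = 1}"
    then obtain a where "w = a # butlast u" "M (hd u) a = 1" by auto
    then show "w \<in> {w\<in>adm_words M k. butlast u = tl w}"
      using ne hb ab lu k by (auto simp: adm_words_def adm_cons)
  qed
  show ?thesis unfolding Tk_eq S using u ne
    by (simp add: sum.reindex inj_on_def)
qed

definition Pinv where
  "Pinv M k j v \<longleftrightarrow> v \<in> Vspace M k \<and> (\<forall>u u'. admissible M k u \<longrightarrow> admissible M k u' \<longrightarrow> take (k - j) u = take (k - j) u' \<longrightarrow> v u = v u')"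

lemma Pinv_step:
  fixes M :: "'a::finite \<Rightarrow> 'a \<Rightarrow> nat"
  assumes P: "Pinv M k j v" and jk: "Suc j \<le> k - 1"
  shows "Pinv M k (Suc j) (Tk M k v)"
  unfolding Pinv_def
proof (intro conjI allI impI)
  show "Tk M k v \<in> Vspace M k"
    unfolding Vspace_def by (auto simp: Tk_eq split: if_splits)
next
  fix u u' assume u: "admissible M k u" and u': "admissible M k u'"
    and t: "take (k - Suc j) u = take (k - Suc j) u'"
  have k: "k \<ge> 2" using jk by simp
  have lu: "length u = k" "length u' = k" using u u' by (auto simp: admissible_def)
  have "hd (take (k - Suc j) u) = hd (take (k - Suc j) u')" using t by simp
  then have h: "hd u = hd u'" using jk by (simp add: hd_take)
  show "Tk M k v u = Tk M k v u'"
    unfolding Tk_formula[OF u k] Tk_formula[OF u' k] h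
  proof (intro sum.cong refl)
    fix a assume a: "a \<in> {a. M (hd u') a = 1}"
    have ne: "u \<noteq> []" "butlast u \<noteq> []" "u' \<noteq> []" "butlast u' \<noteq> []" using lu k by (auto simp flip: length_greater_0_conv)
    have hb: "hd (butlast u) = hd u" "hd (butlast u') = hd u'" using ne
      by (metis append_butlast_last_id hd_append2)+
    have a1: "admissible M k (a # butlast u)"
      using a ne hb h adm_butlast[OF u] lu k by (simp add: adm_cons)
    have a2: "admissible M k (a # butlast u')"
      using a ne hb h adm_butlast[OF u'] lu k by (simp add: adm_cons)
    have kj: "k - j = Suc (k - Suc j)" using jk by simp
    have "take (k - j) (a # butlast u) = a # take (k - Suc j) (butlast u)"
      using kj by simp
    also have "\<dots> = a # take (k - Suc j) u" using lu jk by (simp add: take_butlast)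
    also have "\<dots> = a # take (k - Suc j) u'" using t by simp
    also have "\<dots> = a # take (k - Suc j) (butlast u')" using lu jk by (simp add: take_butlast)
    also have "\<dots> = take (k - j) (a # butlast u')"
      using kj by simp
    finally show "v (a # butlast u) = v (a # butlast u')"
      using P a1 a2 unfolding Pinv_def by blast
  qed
qed

lemma Pinv_iter:
  fixes M :: "'a::finite \<Rightarrow> 'a \<Rightarrow> nat"
  assumes v: "v \<in> Vspace M k" and jk: "j \<le> k - 1"
  shows "Pinv M k j ((Tk M k ^^ j) v)"
  using jk
proof (induction j)
  case 0
  then show ?case using v by (auto simp: Pinv_def adm_len)
next
  case (Suc j)
  then show ?case using Pinv_step[of M k j] by simp
qed

lemma Pinv_final:
  fixes M :: "'a::finite \<Rightarrow> 'a \<Rightarrow> nat"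
  assumes P: "Pinv M k (k - 1) w" and k: "k \<ge> 1"
  shows "w \<in> psi M k ` UNIV"
proof -
  define c where "c a = w (SOME u. admissible M k u \<and> hd u = a)" for a
  have "psi M k c = w"
  proof
    fix u
    have "psi M k c u = (\<Sum>a\<in>UNIV. if a = hd u then (if admissible M k u then c a else 0) else 0)"
      unfolding psi_def psi_basis_eq by (intro sum.cong refl) auto
    also have "\<dots> = (if admissible M k u then c (hd u) else 0)" by simp
    also have "\<dots> = w u"
    proof (cases "admissible M k u")
      case True
      define u' where "u' = (SOME u'. admissible M k u' \<and> hd u' = hd u)"
      have u': "admissible M k u' \<and> hd u' = hd u"
        unfolding u'_def by (rule someI[of _ u]) (use True in simp)
      have "length u = k" "length u' = k" using True u' by (auto simp: adm_len)
      then have ne: "u \<noteq> []" "u' \<noteq> []" using k by auto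
      have k1: "k - (k - 1) = 1" using k by simp
      have t1: "take 1 u = [hd u]" using ne(1) by (cases u) simp_all
      have t2: "take 1 u' = [hd u']" using ne(2) by (cases u') simp_all
      have "take (k - (k - 1)) u' = take (k - (k - 1)) u"
        unfolding k1 t1 t2 using u' by simp
      moreover have PP: "\<forall>u u'. admissible M k u \<longrightarrow> admissible M k u' \<longrightarrow> take (k - (k - 1)) u = take (k - (k - 1)) u' \<longrightarrow> w u = w u'"
        using P unfolding Pinv_def by blast
      ultimately have "w u' = w u" using u' True by blast
      then show ?thesis using True by (simp add: c_def u'_def)
    next
      case False
      then show ?thesis using P by (auto simp: Pinv_def Vspace_def)
    qed
    finally show "psi M k c u = w u" .
  qed
  then show ?thesis by blast
qed

theorem lemma1p2:
  fixes M :: "'a::finite \<Rightarrow> 'a \<Rightarrow> nat" and k :: nat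
  assumes "\<forall>x y. M x y \<in> {0, 1}"
    and "k \<ge> 1"
  shows "\<exists>m. \<forall>v\<in>Vspace M k. (Tk M k ^^ m) v \<in> psi M k ` UNIV"
  using Pinv_final[OF Pinv_iter assms(2)] by blast

end
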